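(* Let $X$ be an infinite Hausdorff space. Then every finite rooted tree, equipped with the topology whose open sets are its upward closed subsets, is the image of a continuous surjection from $X$.
   Context: A finite rooted tree is a finite partially ordered set $(T,\le)$ with a least element (the root) such that for every $t\in T$ the set $\{s\in T\mid s\le t\}$ is linearly ordered. A subset $U\subseteq T$ is upward closed if $u\in U$ and $u\le v$ imply $v\in U$. *)

theory Defs
  imports "HOL-Analysis.Analysis"
begin

definition finite_rooted_tree :: "'b set \<Rightarrow> ('b \<Rightarrow> 'b \<Rightarrow> bool) \<Rightarrow> bool" where
  "finite_rooted_tree T le \<longleftrightarrow>
     finite T \<and>
     (\<forall>x\<in>T. le x x) \<and>
     (\<forall>x\<in>T. \<forall>y\<in>T. le x y \<and> le y x \<longrightarrow> x = y) \<and>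
     (\<forall>x\<in>T. \<forall>y\<in>T. \<forall>z\<in>T. le x y \<and> le y z \<longrightarrow> le x z) \<and>
     (\<exists>r\<in>T. \<forall>t\<in>T. le r t) \<and>
     (\<forall>t\<in>T. \<forall>s1\<in>T. \<forall>s2\<in>T. le s1 t \<and> le s2 t \<longrightarrow> le s1 s2 \<or> le s2 s1)"

definition upward_closed :: "'b set \<Rightarrow> ('b \<Rightarrow> 'b \<Rightarrow> bool) \<Rightarrow> 'b set \<Rightarrow> bool" where
  "upward_closed T le U \<longleftrightarrow> U \<subseteq> T \<and> (\<forall>u\<in>U. \<forall>v\<in>T. le u v \<longrightarrow> v \<in> U)"

definition upset_topology :: "'b set \<Rightarrow> ('b \<Rightarrow> 'b \<Rightarrow> bool) \<Rightarrow> 'b topology" where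
  "upset_topology T le = topology (upward_closed T le)"

end

theory Submission
  imports Defs
begin

lemma split_step:
  assumes H: "Hausdorff_space X" and W: "openin X W" "infinite W"
  shows "\<exists>A W'. openin X A \<and> A \<noteq> {} \<and> openin X W' \<and> infinite W' \<and> W' \<subseteq> W \<and> A \<subseteq> W \<and> A \<inter> W' = {}"
proof -
  obtain a where a: "a \<in> W" using W(2) by (metis finite.emptyI ex_in_conv)
  have "infinite (W - {a})" using W(2) by simp
  then obtain b where b: "b \<in> W" "b \<noteq> a" by (metis Diff_iff finite.emptyI insertI1 ex_in_conv)
  have WX: "W \<subseteq> topspace X" using W(1) openin_subset by auto
  then obtain A B where AB: "openin X A" "openin X B" "a \<in> A" "b \<in> B" "disjnt A B"
    using H a b unfolding Hausdorff_space_def by (metis subsetD)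
  show ?thesis
  proof (cases "finite (W \<inter> A)")
    case True
    have c: "closedin X (W \<inter> A)" using closedin_Hausdorff_finite[OF H _ True] WX by auto
    have o: "openin X (W - (W \<inter> A))" using openin_diff[OF W(1) c] .
    have "infinite (W - (W \<inter> A))" using W(2) True by auto
    then show ?thesis
      using o a AB W(1) by (intro exI[of _ "W \<inter> A"] exI[of _ "W - (W \<inter> A)"]) auto
  next
    case False
    then show ?thesis using AB W(1) b unfolding disjnt_def
      by (intro exI[of _ "W \<inter> B"] exI[of _ "W \<inter> A"]) auto
  qed
qed

lemma many_opens:
  fixes n :: nat
  assumes H: "Hausdorff_space X" and inf: "infinite (topspace X)"
  shows "\<exists>V W. (\<forall>i<n. openin X (V i) \<and> V i \<noteq> {}) \<and> (\<forall>i<n. \<forall>j<n. i \<noteq> j \<longrightarrow> V i \<inter> V j = {})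
     \<and> openin X W \<and> infinite W \<and> (\<forall>i<n. V i \<inter> W = {})"
proof (induction n)
  case 0
  then show ?case using inf by (intro exI[of _ "\<lambda>_. {}"] exI[of _ "topspace X"]) auto
next
  case (Suc n)
  then obtain V W where VW: "\<forall>i<n. openin X (V i) \<and> V i \<noteq> {}" "\<forall>i<n. \<forall>j<n. i \<noteq> j \<longrightarrow> V i \<inter> V j = {}"
     "openin X W" "infinite W" "\<forall>i<n. V i \<inter> W = {}" by blast
  obtain A W' where AW: "openin X A" "A \<noteq> {}" "openin X W'" "infinite W'" "W' \<subseteq> W" "A \<subseteq> W" "A \<inter> W' = {}"
    using split_step[OF H VW(3,4)] by blast
  let ?V = "V(n := A)"
  have "\<forall>i<Suc n. openin X (?V i) \<and> ?V i \<noteq> {}" using VW AW by (auto simp: less_Suc_eq)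
  moreover have "\<forall>i<Suc n. \<forall>j<Suc n. i \<noteq> j \<longrightarrow> ?V i \<inter> ?V j = {}"
    using VW(2,5) AW(6) by (auto simp: less_Suc_eq; blast)
  moreover have "\<forall>i<Suc n. ?V i \<inter> W' = {}" using VW(5) AW by (auto simp: less_Suc_eq)
  ultimately show ?case using AW by blast
qed

lemma frt_fin: "finite_rooted_tree T le \<Longrightarrow> finite T"
  unfolding finite_rooted_tree_def by (elim conjE)

lemma frt_root: "finite_rooted_tree T le \<Longrightarrow> \<exists>r\<in>T. \<forall>t\<in>T. le r t"
  unfolding finite_rooted_tree_def by (elim conjE)

theorem lemma9p5:
  fixes X :: "'a topology" and T :: "'b set" and le :: "'b \<Rightarrow> 'b \<Rightarrow> bool"
  assumes "Hausdorff_space X" and "infinite (topspace X)"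
    and "finite_rooted_tree T le"
  shows "\<exists>f. continuous_map X (upset_topology T le) f \<and> f ` topspace X = T"
proof -
  have fin: "finite T" using assms(3) by (rule frt_fin)
  have "\<exists>r\<in>T. \<forall>t\<in>T. le r t" using assms(3) by (rule frt_root)
  then obtain r where r: "r \<in> T" "\<forall>t\<in>T. le r t" by blast
  obtain e n where e: "e ` T = {i::nat. i < n}" "inj_on e T" using finite_imp_inj_to_nat_seg[OF fin] by (elim exE conjE)
  obtain V W where VW: "\<forall>i<n. openin X (V i) \<and> V i \<noteq> {}" "\<forall>i<n. \<forall>j<n. i \<noteq> j \<longrightarrow> V i \<inter> V j = {}"
     "openin X W" "infinite W" "\<forall>i<n. V i \<inter> W = {}" using many_opens[OF assms(1,2), where n=n] by (elim exE conjE)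
  define U where "U t = V (e t)" for t
  have Uo: "openin X (U t)" "U t \<noteq> {}" if "t \<in> T" for t using VW(1) e(1) that unfolding U_def by auto
  have Ud: "U s \<inter> U t = {}" if "s \<in> T" "t \<in> T" "s \<noteq> t" for s t
  proof -
    have "e s < n" "e t < n" "e s \<noteq> e t" using e that unfolding inj_on_def by auto
    then show ?thesis using VW(2) unfolding U_def by blast
  qed
  have UW: "U t \<inter> W = {}" if "t \<in> T" for t using VW(5) e(1) that unfolding U_def by auto
  define f where "f x = (if \<exists>t\<in>T-{r}. x \<in> U t then (SOME t. t\<in>T-{r} \<and> x \<in> U t) else r)" for x
  have f1: "f x = t" if "t \<in> T-{r}" "x \<in> U t" for x t
  proof -
    have "(SOME t. t\<in>T-{r} \<and> x \<in> U t) = t"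
      using that Ud by (intro some_equality) auto
    then show ?thesis using that unfolding f_def by auto
  qed
  have f2: "f x = r" if "\<forall>t\<in>T-{r}. x \<notin> U t" for x using that unfolding f_def by auto
  have fT: "f x \<in> T" for x
  proof (cases "\<exists>t\<in>T-{r}. x \<in> U t")
    case True then obtain t where "t\<in>T-{r}" "x \<in> U t" by blast
    then show ?thesis using f1 by auto
  qed (use f2 r in auto)
  have topo: "istopology (upward_closed T le)"
    unfolding istopology_def upward_closed_def by blast
  have opn: "openin (upset_topology T le) = upward_closed T le"
    unfolding upset_topology_def using topo by simp
  have top: "topspace (upset_topology T le) = T"
    unfolding topspace_def opn upward_closed_def by auto
  have "continuous_map X (upset_topology T le) f"
    unfolding continuous_map_def
  proof (intro conjI allI impI)
    show "f \<in> topspace X \<rightarrow> topspace (upset_topology T le)" using fT top by auto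
    fix S assume "openin (upset_topology T le) S"
    then have S: "upward_closed T le S" using opn by simp
    show "openin X {x \<in> topspace X. f x \<in> S}"
    proof (cases "r \<in> S")
      case True
      then have "S = T" using S r unfolding upward_closed_def by auto
      then show ?thesis using fT by simp
    next
      case False
      have "{x \<in> topspace X. f x \<in> S} = (\<Union>t\<in>S. U t)"
      proof (intro set_eqI iffI)
        fix x assume x: "x \<in> {x \<in> topspace X. f x \<in> S}"
        then have "\<exists>t\<in>T-{r}. x \<in> U t" using f2 False by force
        then obtain t where "t\<in>T-{r}" "x \<in> U t" by blast
        then show "x \<in> (\<Union>t\<in>S. U t)" using f1 x by auto
      next
        fix x assume "x \<in> (\<Union>t\<in>S. U t)"
        then obtain t where t: "t \<in> S" "x \<in> U t" by blast
        then have "t \<in> T - {r}" using S False unfolding upward_closed_def by auto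
        then show "x \<in> {x \<in> topspace X. f x \<in> S}"
          using f1 t Uo openin_subset by fastforce
      qed
      moreover have "openin X (\<Union>t\<in>S. U t)"
        using Uo S unfolding upward_closed_def by (intro openin_Union) auto
      ultimately show ?thesis by simp
    qed
  qed
  moreover have "f ` topspace X = T"
  proof
    show "f ` topspace X \<subseteq> T" using fT by auto
    show "T \<subseteq> f ` topspace X"
    proof
      fix t assume t: "t \<in> T"
      show "t \<in> f ` topspace X"
      proof (cases "t = r")
        case True
        obtain w where w: "w \<in> W" using VW(4) by (metis finite.emptyI ex_in_conv)
        have "w \<in> topspace X" using w VW(3) openin_subset by auto
        moreover have "f w = r" using f2 w UW by auto
        ultimately show ?thesis using True by auto
      next
        case False
        obtain x where x: "x \<in> U t" using Uo(2)[OF t] by auto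
        have "x \<in> topspace X" using x Uo(1)[OF t] openin_subset by auto
        moreover have "f x = t" using f1 x t False by auto
        ultimately show ?thesis by auto
      qed
    qed
  qed
  ultimately show ?thesis by blast
qed

end
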